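(* Let $n\ge 2$. Every $1$-Costas permutation $\pi$ of $\{1,\ldots,n\}$ satisfies $\delta(\pi)\ge\lceil n/2\rceil$, and there exists a $1$-Costas permutation $\pi^*$ of $\{1,\ldots,n\}$ with $\delta(\pi^* )=\lceil n/2\rceil$. Such a $\pi^*$ is given, according to the parity of $n$, by the permutation matrix: (i) if $n=2k$: $P_{\pi^*}=\Pi_k\oplus L_k\Pi_k$; (ii) if $n=2k+1$ with $k$ even: $P_{\pi^*}=\begin{bmatrix} O & L_{k+1}\Pi_{k+1}\\ \Pi_k & O\end{bmatrix}$; (iii) if $n=2k+1$ with $k$ odd: $P_{\pi^*}=\begin{bmatrix} O & L_{k+1}\Pi_{k+1}L_{k+1}\\ \Pi_k L_k & O\end{bmatrix}$. Moreover, in each case $\pi^*$ attains the minimum of the global variation $\Delta(\pi)$ over all $1$-Costas permutations $\pi$ of $\{1,\ldots,n\}$, and this minimum equals $n^2/4$ if $n$ is even and $(n^2+3)/4$ if $n$ is odd.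
   Context: For a permutation $\pi=(\pi_1,\ldots,\pi_n)$ of $\{1,\ldots,n\}$: its discrete derivative is $D(\pi)=(\pi_2-\pi_1,\ldots,\pi_n-\pi_{n-1})$; its local variation is $\delta(\pi)=\max_i|\pi_{i+1}-\pi_i|$; its global variation is $\Delta(\pi)=\sum_{i=1}^{n-1}|\pi_{i+1}-\pi_i|$. $\pi$ is $1$-Costas if the $n-1$ entries of $D(\pi)$ are pairwise distinct. $P_\pi$ is the $n\times n$ permutation matrix with $1$ in positions $(i,\pi_i)$ and $0$ elsewhere. $L_m$ is the $m\times m$ backward identity matrix (ones in positions $(i,m+1-i)$), so $L_mP$ reverses the order of the rows of $P$ and $PL_m$ reverses the order of its columns. For $m\ge1$, $\Pi_m=P_{\pi_{(m)}}$ where $\pi_{(m)}$ is the permutation of $\{1,\ldots,m\}$ defined by: if $m=2p$, $\pi_{(m)}=(p,p+1,p-1,p+2,p-2,\ldots,1,2p)$, i.e. $\pi_{(m)}(2j-1)=p+1-j$, $\pi_{(m)}(2j)=p+j$ for $1\le j\le p$; if $m=2p+1$, $\pi_{(m)}=(p+1,p+2,p,p+3,p-1,\ldots,2p+1,1)$, i.e. $\pi_{(m)}(2j-1)=p+2-j$ for $1\le j\le p+1$ and $\pi_{(m)}(2j)=p+1+j$ for $1\le j\le p$. (Its derivative is $(1,-2,3,-4,\ldots)$.) $A\oplus B$ denotes the block diagonal matrix; in (ii),(iii) the block $L_{k+1}\Pi_{k+1}$ (resp. $L_{k+1}\Pi_{k+1}L_{k+1}$) occupies rows $1,\ldots,k+1$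 and columns $k+1,\ldots,2k+1$, the $k\times k$ block occupies rows $k+2,\ldots,2k+1$ and columns $1,\ldots,k$, and $O$ denotes zero blocks. *)

theory Defs
  imports "HOL-Combinatorics.Permutations" "Jordan_Normal_Form.Matrix" Complex_Main
begin

definition disc_deriv :: "nat \<Rightarrow> (nat \<Rightarrow> nat) \<Rightarrow> int list" where
  "disc_deriv n p = map (\<lambda>i. int (p (Suc i)) - int (p i)) [1..<n]"

definition one_costas :: "nat \<Rightarrow> (nat \<Rightarrow> nat) \<Rightarrow> bool" where
  "one_costas n p \<longleftrightarrow> p permutes {1..n} \<and> distinct (disc_deriv n p)"

definition local_var :: "nat \<Rightarrow> (nat \<Rightarrow> nat) \<Rightarrow> int" where
  "local_var n p = Max (set (map abs (disc_deriv n p)))"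

definition global_var :: "nat \<Rightarrow> (nat \<Rightarrow> nat) \<Rightarrow> int" where
  "global_var n p = sum_list (map abs (disc_deriv n p))"

text \<open>Permutation matrix: entry (i,j) (1-based) is 1 iff p i = j; JNF matrices are 0-based.\<close>
definition perm_mat :: "nat \<Rightarrow> (nat \<Rightarrow> nat) \<Rightarrow> int mat" where
  "perm_mat n p = mat n n (\<lambda>(i,j). if p (Suc i) = Suc j then 1 else 0)"

text \<open>Backward identity L_m: ones at 1-based positions (i, m+1-i).\<close>
definition back_id :: "nat \<Rightarrow> int mat" where
  "back_id m = mat m m (\<lambda>(i,j). if Suc j = m + 1 - Suc i then 1 else 0)"

definition pi_m :: "nat \<Rightarrow> nat \<Rightarrow> nat" where
  "pi_m m i =
     (if i < 1 \<or> i > m then i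
      else if even m then
        (let p = m div 2 in
          if odd i then p + 1 - (i + 1) div 2 else p + i div 2)
      else
        (let p = m div 2 in
          if odd i then p + 2 - (i + 1) div 2 else p + 1 + i div 2))"

definition Pi_mat :: "nat \<Rightarrow> int mat" where
  "Pi_mat m = perm_mat m (pi_m m)"

end

theory Submission
  imports Defs
begin

lemma card_sym_int: "card ({-M..M} - {0::int}) = nat (2*M)" if "M \<ge> 0" for M :: int
  using that by (simp add: card_Diff_singleton)

lemma sum_bound:
  fixes S :: "int set"
  assumes "finite S" "0 \<notin> S"
  shows "int (card S)^2 + 2 * int (card S) + int (card S mod 2) \<le> 4 * (\<Sum>x\<in>S. \<bar>x\<bar>)"
  using assms
proof (induction S rule: finite_ranking_induct[where f = abs])
  case empty
  then show ?case by simp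
next
  case (insert x S)
  show ?case
  proof (cases "x \<in> S")
    case True
    then show ?thesis using insert by (simp add: insert_absorb)
  next
    case False
    let ?N = "card S"
    have z: "0 \<notin> insert x S" using insert.prems by simp
    have sub: "insert x S \<subseteq> {-\<bar>x\<bar>..\<bar>x\<bar>} - {0}"
    proof
      fix y assume "y \<in> insert x S"
      then show "y \<in> {-\<bar>x\<bar>..\<bar>x\<bar>} - {0}" using insert.hyps(2)[of y] z by (cases "y = x") (auto simp: abs_le_iff)
    qed
    have "card (insert x S) \<le> card ({-\<bar>x\<bar>..\<bar>x\<bar>} - {0})"
      by (rule card_mono[OF _ sub]) simp
    hence c: "int ?N + 1 \<le> 2 * \<bar>x\<bar>" using False insert by (simp add: card_sym_int)
    have IH: "int ?N^2 + 2 * int ?N + int (?N mod 2) \<le> 4 * (\<Sum>x\<in>S. \<bar>x\<bar>)" using insert.IH z by simp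
    have s: "(\<Sum>x\<in>insert x S. \<bar>x\<bar>) = \<bar>x\<bar> + (\<Sum>x\<in>S. \<bar>x\<bar>)" using False insert by simp
    have "int (Suc ?N)^2 + 2 * int (Suc ?N) + int (Suc ?N mod 2) \<le> 4 * (\<bar>x\<bar> + (\<Sum>x\<in>S. \<bar>x\<bar>))"
    proof (cases "even ?N")
      case True
      then obtain t where t: "?N = 2*t" by blast
      have "int ?N + 2 \<le> 2 * \<bar>x\<bar>" using c t by presburger
      then show ?thesis using IH t by (simp add: power2_eq_square algebra_simps)
    next
      case False
      then obtain t where t: "?N = 2*t+1" using oddE by blast
      have "int (Suc (t*2) mod 2) = 1" by presburger
      then show ?thesis using IH t c by (simp add: power2_eq_square algebra_simps)
    qed
    then show ?thesis using s False insert by simp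
  qed
qed

lemma sum_sym_int: "(\<Sum>x\<in>{-M..M}. x) = (0::int)"
proof -
  have "(\<Sum>x\<in>{-M..M}. x) = (\<Sum>x\<in>uminus ` {-M..M}. x)"
    by (rule sum.cong) (auto simp: image_iff intro!: exI[of _ "- _"])
  also have "\<dots> = (\<Sum>x\<in>{-M..M}. - x)" by (subst sum.reindex) (auto simp: inj_on_def)
  also have "\<dots> = - (\<Sum>x\<in>{-M..M}. x)" by (simp add: sum_negf)
  finally show ?thesis by simp
qed

lemma sl_set: "distinct xs \<Longrightarrow> sum_list xs = (\<Sum>x\<in>set xs. x)" for xs :: "int list"
  by (induct xs) simp_all

lemma costas_basic:
  assumes c: "one_costas n p" and n: "n \<ge> 2"
  shows "distinct (disc_deriv n p)" "0 \<notin> set (disc_deriv n p)"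
        "card (set (disc_deriv n p)) = n - 1"
        "sum_list (disc_deriv n p) \<noteq> 0"
proof -
  have perm: "p permutes {1..n}" and d: "distinct (disc_deriv n p)" using c by (auto simp: one_costas_def)
  show "distinct (disc_deriv n p)" by (rule d)
  have inj: "inj_on p {1..n}" using perm permutes_inj_on by blast
  show "0 \<notin> set (disc_deriv n p)"
  proof
    assume "0 \<in> set (disc_deriv n p)"
    then obtain i where i: "1 \<le> i" "i < n" "int (p (Suc i)) - int (p i) = 0" by (auto simp: disc_deriv_def)
    then have "p (Suc i) = p i" by simp
    with inj i show False by (auto dest: inj_onD)
  qed
  show "card (set (disc_deriv n p)) = n - 1" using distinct_card[OF d] by (simp add: disc_deriv_def)
  have "sum_list (disc_deriv n p) = (\<Sum>i = 1..<n. int (p (Suc i)) - int (p i))"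
    by (simp add: disc_deriv_def interv_sum_list_conv_sum_set_nat)
  also have "\<dots> = int (p n) - int (p 1)" using n by (subst sum_Suc_diff') auto
  finally show "sum_list (disc_deriv n p) \<noteq> 0" using inj n by (auto dest: inj_onD)
qed

lemma local_lb:
  assumes c: "one_costas n p" and n: "n \<ge> 2"
  shows "int n \<le> 2 * local_var n p"
proof -
  note b = costas_basic[OF c n]
  let ?S = "set (disc_deriv n p)"
  define M where "M = local_var n p"
  have ne: "?S \<noteq> {}" using b(3) n by auto
  have le: "\<bar>x\<bar> \<le> M" if "x \<in> ?S" for x
    unfolding M_def local_var_def using that by (intro Max_ge) auto
  obtain x0 :: int where "x0 \<in> ?S" using ne by (meson all_not_in_conv)
  hence M0: "M \<ge> 0" using le[of x0] by linarith
  have sub: "?S \<subseteq> {-M..M} - {0}"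
  proof
    fix y assume "y \<in> ?S"
    then show "y \<in> {-M..M} - {0}" using le[of y] b(2) by (auto simp: abs_le_iff)
  qed
  have cle: "card ?S \<le> card ({-M..M} - {0})" by (rule card_mono[OF _ sub]) simp
  hence c1: "int n - 1 \<le> 2 * M" using b(3) M0 n by (simp add: card_sym_int)
  show ?thesis
  proof (rule ccontr)
    assume "\<not> ?thesis"
    hence eq: "int n - 1 = 2 * M" using c1 M_def by simp
    hence "card ?S = card ({-M..M} - {0})" using b(3) M0 n by (simp add: card_sym_int)
    hence "?S = {-M..M} - {0}" using sub by (intro card_subset_eq) auto
    hence "sum_list (disc_deriv n p) = (\<Sum>x\<in>{-M..M} - {0}. x)"
      using sl_set[OF b(1)] by (simp only:)
    also have "\<dots> = 0" by (subst sum_diff1) (auto simp: sum_sym_int)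
    finally show False using b(4) by simp
  qed
qed

lemma global_lb_even:
  assumes c: "one_costas n p" and n: "n \<ge> 2" and k: "n = 2 * k"
  shows "int k ^ 2 \<le> global_var n p"
proof -
  note b = costas_basic[OF c n]
  let ?S = "set (disc_deriv n p)"
  have g: "global_var n p = (\<Sum>x\<in>?S. \<bar>x\<bar>)"
    unfolding global_var_def using b(1) by (simp add: sum_list_distinct_conv_sum_set)
  have sb: "int (card ?S)^2 + 2 * int (card ?S) + int (card ?S mod 2) \<le> 4 * (\<Sum>x\<in>?S. \<bar>x\<bar>)"
    using b(2) by (intro sum_bound) auto
  obtain t where t: "k = Suc t" using n k by (cases k) auto
  have cs: "card ?S = 2*t+1" using b(3) k t by simp
  have "int (Suc (2 * t) mod 2) = 1" by presburger
  then show ?thesis using sb g cs t by (simp add: power2_eq_square algebra_simps)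
qed


lemma global_lb_odd:
  assumes c: "one_costas n p" and n: "n \<ge> 2" and k: "n = 2 * k + 1"
  shows "int k ^ 2 + int k + 1 \<le> global_var n p"
proof -
  note b = costas_basic[OF c n]
  let ?S = "set (disc_deriv n p)"
  have g: "global_var n p = (\<Sum>x\<in>?S. \<bar>x\<bar>)"
    unfolding global_var_def using b(1) by (simp add: sum_list_distinct_conv_sum_set)
  have cs: "card ?S = 2*k" using b(3) k by simp
  have "\<exists>x\<in>?S. \<bar>x\<bar> \<ge> int k + 1"
  proof (rule ccontr)
    assume "\<not> ?thesis"
    hence le: "\<bar>y\<bar> \<le> int k" if "y \<in> ?S" for y using that by force
    have sub: "?S \<subseteq> {-int k..int k} - {0}"
    proof
      fix y assume "y \<in> ?S"
      then show "y \<in> {-int k..int k} - {0}" using le[of y] b(2) by (auto simp: abs_le_iff)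
    qed
    have "card ?S = card ({-int k..int k} - {0})" using cs by (simp add: card_sym_int)
    hence "?S = {-int k..int k} - {0}" using sub by (intro card_subset_eq) auto
    hence "sum_list (disc_deriv n p) = (\<Sum>x\<in>{-int k..int k} - {0}. x)"
      using sl_set[OF b(1)] by (simp only:)
    also have "\<dots> = 0" by (subst sum_diff1) (auto simp: sum_sym_int)
    finally show False using b(4) by simp
  qed
  then obtain x where x: "x \<in> ?S" "\<bar>x\<bar> \<ge> int k + 1" by blast
  obtain m where m: "k = Suc m" using n k by (cases k) auto
  let ?T = "?S - {x}"
  have cT: "card ?T = 2*m+1" using cs x m by simp
  have sb: "int (card ?T)^2 + 2 * int (card ?T) + int (card ?T mod 2) \<le> 4 * (\<Sum>x\<in>?T. \<bar>x\<bar>)"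
    using b(2) by (intro sum_bound) auto
  have "int ((2*m+1) mod 2) = 1" by presburger
  hence sT: "int k ^ 2 \<le> (\<Sum>x\<in>?T. \<bar>x\<bar>)" using sb cT m
    by (simp add: power2_eq_square algebra_simps)
  have "(\<Sum>x\<in>?S. \<bar>x\<bar>) = \<bar>x\<bar> + (\<Sum>x\<in>?T. \<bar>x\<bar>)" using x by (simp add: sum.remove)
  then show ?thesis using g sT x by simp
qed



definition D :: "nat \<Rightarrow> int" where "D i = (if odd i then int i else - int i)"

lemma pim_val: "1 \<le> i \<Longrightarrow> i \<le> m \<Longrightarrow> int (pi_m m i) =
  (if even m then (if odd i then int (m div 2) - int (i div 2) else int (m div 2) + int (i div 2))
   else (if odd i then int (m div 2) + 1 - int (i div 2) else int (m div 2) + 1 + int (i div 2)))"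
proof -
  assume a: "1 \<le> i" "i \<le> m"
  have "pi_m m i = (if even m then (if odd i then m div 2 + 1 - (i + 1) div 2 else m div 2 + i div 2)
      else (if odd i then m div 2 + 2 - (i + 1) div 2 else m div 2 + 1 + i div 2))"
    using a unfolding pi_m_def Let_def by simp
  moreover have "odd i \<Longrightarrow> (i+1) div 2 = i div 2 + 1" by presburger
  moreover have "odd i \<Longrightarrow> i div 2 \<le> m div 2" using a by (simp add: div_le_mono)
  moreover have "odd i \<Longrightarrow> even m \<Longrightarrow> i < m" using a by (metis le_neq_implies_less)
  moreover have "odd i \<Longrightarrow> even m \<Longrightarrow> i < m \<Longrightarrow> i div 2 < m div 2" by presburger
  ultimately show ?thesis by auto
qed

lemma nat_dec: "int n = 2 * int (n div 2) + (if odd n then 1 else 0)"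
proof (cases "odd n")
  case True
  then obtain t where "n = 2*t+1" by (auto elim: oddE)
  then show ?thesis by simp
next
  case False
  then obtain t where "n = 2*t" by (auto elim: evenE)
  then show ?thesis by simp
qed

lemma pim_range: "1 \<le> i \<Longrightarrow> i \<le> m \<Longrightarrow> 1 \<le> pi_m m i \<and> pi_m m i \<le> m"
proof -
  assume a: "1 \<le> i" "i \<le> m"
  have "1 \<le> int (pi_m m i) \<and> int (pi_m m i) \<le> int m" using pim_val[OF a] a nat_dec[of i] nat_dec[of m]
    by (cases "even m"; cases "odd i") simp_all
  then show ?thesis by linarith
qed

lemma pim_inj: "inj_on (pi_m m) {1..m}"
proof (rule inj_onI)
  fix i j assume i: "i \<in> {1..m}" and j: "j \<in> {1..m}" and e: "pi_m m i = pi_m m j"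
  have e2: "int (pi_m m i) = int (pi_m m j)" using e by simp
  show "i = j" using pim_val[of i m] pim_val[of j m] i j e2 nat_dec[of i] nat_dec[of j] nat_dec[of m]
    by (cases "even m"; cases "odd i"; cases "odd j") simp_all
qed

lemma pim_permutes: "pi_m m permutes {1..m}"
proof (rule bij_imp_permutes)
  have "pi_m m ` {1..m} = {1..m}"
    by (rule endo_inj_surj) (use pim_range pim_inj in auto)
  then show "bij_betw (pi_m m) {1..m} {1..m}" using pim_inj by (simp add: bij_betw_def)
  show "\<And>x. x \<notin> {1..m} \<Longrightarrow> pi_m m x = x" unfolding pi_m_def by auto
qed

lemma pim_diff: "1 \<le> i \<Longrightarrow> i < m \<Longrightarrow> int (pi_m m (Suc i)) - int (pi_m m i) = D i"
proof -
  assume a: "1 \<le> i" "i < m"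
  have "Suc i div 2 = (if odd i then i div 2 + 1 else i div 2)" by presburger
  then show ?thesis using pim_val[of i m] pim_val[of "Suc i" m] a nat_dec[of i] unfolding D_def
    by (cases "even m"; cases "odd i") simp_all
qed

lemma pim_1: "1 \<le> m \<Longrightarrow> pi_m m 1 = (m+1) div 2"
proof -
  assume a: "1 \<le> m"
  have "int (pi_m m 1) = int ((m+1) div 2)" using pim_val[of 1 m] a nat_dec[of m] nat_dec[of "m+1"]
    by (cases "even m") simp_all
  then show ?thesis by simp
qed

lemma pim_last: "1 \<le> m \<Longrightarrow> pi_m m m = (if even m then m else 1)"
proof -
  assume a: "1 \<le> m"
  have "int (pi_m m m) = int (if even m then m else 1)" using pim_val[of m m] a nat_dec[of m]
    by (cases "even m") simp_all
  then show ?thesis by simp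
qed


definition dd :: "(nat \<Rightarrow> nat) \<Rightarrow> nat \<Rightarrow> int" where "dd q i = int (q (Suc i)) - int (q i)"

lemma disc_deriv_dd: "disc_deriv n q = map (dd q) [1..<n]"
  by (simp add: disc_deriv_def dd_def)

lemma costas_from:
  assumes perm: "q permutes {1..n}" and inj: "inj_on (dd q) {1..<n}" and n: "n \<ge> 2"
    and bd: "\<And>i. 1 \<le> i \<Longrightarrow> i < n \<Longrightarrow> \<bar>dd q i\<bar> \<le> c"
  shows "one_costas n q" "local_var n q \<le> c" "global_var n q = (\<Sum>i\<in>{1..<n}. \<bar>dd q i\<bar>)"
proof -
  show "one_costas n q" unfolding one_costas_def disc_deriv_dd using perm inj
    by (simp add: distinct_map)
  have "local_var n q = Max ((\<lambda>i. \<bar>dd q i\<bar>) ` {1..<n})"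
    unfolding local_var_def disc_deriv_dd by (simp add: image_image)
  also have "\<dots> \<le> c" using n bd by (subst Max_le_iff) auto
  finally show "local_var n q \<le> c" .
  show "global_var n q = (\<Sum>i\<in>{1..<n}. \<bar>dd q i\<bar>)"
    unfolding global_var_def disc_deriv_dd by (simp add: interv_sum_list_conv_sum_set_nat comp_def)
qed

lemma D_abs: "\<bar>D i\<bar> = int i" by (simp add: D_def)
lemma D_neg: "D i = - D j \<Longrightarrow> i = 0 \<and> j = 0" by (simp add: D_def split: if_splits)
lemma D_inj: "D i = D j \<Longrightarrow> i = j" by (simp add: D_def split: if_splits)

lemma G2: "2 * (\<Sum>j\<in>{1..<a}. int j) = int a * (int a - 1)"
  by (induction a) (auto simp: algebra_simps)

lemma refl_sum: "(\<Sum>i\<in>{Suc a..<2*a}. f (2*a - i)) = (\<Sum>j\<in>{1..<a}. f j)"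
  by (rule sum.reindex_bij_witness[of _ "\<lambda>j. 2*a - j" "\<lambda>i. 2*a - i"]) auto

lemma refl_sum2: "(\<Sum>i\<in>{1..<Suc a}. f (Suc a - i)) = (\<Sum>j\<in>{1..<Suc a}. f j)"
  by (rule sum.reindex_bij_witness[of _ "\<lambda>j. Suc a - j" "\<lambda>i. Suc a - i"]) auto

lemma shift_sum: "(\<Sum>i\<in>{(a::nat)+2..<2*a+1}. f (i - a - 1)) = (\<Sum>j\<in>{1..<a}. f j)"
  by (rule sum.reindex_bij_witness[of _ "\<lambda>j. j + a + 1" "\<lambda>i. i - a - 1"]) auto


lemma back_id_carrier[simp]: "back_id m \<in> carrier_mat m m" by (simp add: back_id_def)
lemma Pi_mat_carrier[simp]: "Pi_mat m \<in> carrier_mat m m" by (simp add: Pi_mat_def perm_mat_def)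
lemma Pi_mat_dims[simp]: "dim_row (Pi_mat m) = m" "dim_col (Pi_mat m) = m" by (simp_all add: Pi_mat_def perm_mat_def)
lemma back_id_dims[simp]: "dim_row (back_id m) = m" "dim_col (back_id m) = m" by (simp_all add: back_id_def)
lemma Pi_mat_idx: "i < m \<Longrightarrow> j < m \<Longrightarrow> Pi_mat m $$ (i,j) = (if pi_m m (Suc i) = Suc j then 1 else 0)"
  by (simp add: Pi_mat_def perm_mat_def)

lemma back_id_mult:
  assumes "A \<in> carrier_mat m c" "i < m" "j < c"
  shows "(back_id m * A) $$ (i,j) = A $$ (m-1-i, j)"
proof -
  have "(back_id m * A) $$ (i,j) = (\<Sum>l\<in>{0..<m}. back_id m $$ (i,l) * A $$ (l,j))"
    using assms by (simp add: scalar_prod_def)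
  also have "\<dots> = (\<Sum>l\<in>{0..<m}. if l = m-1-i then A $$ (l,j) else 0)"
    using assms by (intro sum.cong) (auto simp: back_id_def)
  also have "\<dots> = A $$ (m-1-i, j)" using assms by (simp add: sum.delta)
  finally show ?thesis .
qed

lemma mult_back_id:
  assumes "A \<in> carrier_mat r m" "i < r" "j < m"
  shows "(A * back_id m) $$ (i,j) = A $$ (i, m-1-j)"
proof -
  have "(A * back_id m) $$ (i,j) = (\<Sum>l\<in>{0..<m}. A $$ (i,l) * back_id m $$ (l,j))"
    using assms by (simp add: scalar_prod_def)
  also have "\<dots> = (\<Sum>l\<in>{0..<m}. if l = m-1-j then A $$ (i,l) else 0)"
    using assms by (intro sum.cong) (auto simp: back_id_def)
  also have "\<dots> = A $$ (i, m-1-j)" using assms by (simp add: sum.delta)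
  finally show ?thesis .
qed


definition qE :: "nat \<Rightarrow> nat \<Rightarrow> nat" where
  "qE k i = (if i < 1 \<or> i > 2*k then i else if i \<le> k then pi_m k i else k + pi_m k (2*k+1-i))"

lemma qE_perm: "qE k permutes {1..2*k}"
proof (rule bij_imp_permutes)
  have r: "qE k i \<in> {1..2*k}" if "i \<in> {1..2*k}" for i
    using that pim_range[of i k] pim_range[of "2*k+1-i" k] by (auto simp: qE_def)
  have inj: "inj_on (qE k) {1..2*k}"
  proof (rule inj_onI)
    fix i j assume i: "i \<in> {1..2*k}" and j: "j \<in> {1..2*k}" and e: "qE k i = qE k j"
    have i': "i \<le> 2*k" "1 \<le> i" and j': "j \<le> 2*k" "1 \<le> j" using i j by auto
    show "i = j"
    proof (cases "i \<le> k"; cases "j \<le> k")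
      assume "i \<le> k" "j \<le> k"
      then show ?thesis using e i j inj_onD[OF pim_inj[of k], of i j] by (auto simp: qE_def)
    next
      assume a: "\<not> i \<le> k" "\<not> j \<le> k"
      have "pi_m k (2*k+1-i) = pi_m k (2*k+1-j)" using e a i' j' by (simp add: qE_def)
      moreover have "2*k+1-i \<in> {1..k}" "2*k+1-j \<in> {1..k}" using a i' j' by auto
      ultimately have "2*k+1-i = 2*k+1-j" using inj_onD[OF pim_inj[of k]] by blast
      then show ?thesis using i' j' by simp
    next
      assume a: "i \<le> k" "\<not> j \<le> k"
      have "1 \<le> 2*k+1-j" "2*k+1-j \<le> k" using a j' by auto
      then have "pi_m k (2*k+1-j) \<ge> 1" using pim_range by blast
      moreover have "pi_m k i \<le> k" using pim_range[of i k] a i' by auto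
      ultimately show ?thesis using e a i' j' by (simp add: qE_def)
    next
      assume a: "\<not> i \<le> k" "j \<le> k"
      have "1 \<le> 2*k+1-i" "2*k+1-i \<le> k" using a i' by auto
      then have "pi_m k (2*k+1-i) \<ge> 1" using pim_range by blast
      moreover have "pi_m k j \<le> k" using pim_range[of j k] a j' by auto
      ultimately show ?thesis using e a i' j' by (simp add: qE_def)
    qed
  qed
  have "qE k ` {1..2*k} = {1..2*k}" by (rule endo_inj_surj) (use r inj in auto)
  then show "bij_betw (qE k) {1..2*k} {1..2*k}" using inj by (simp add: bij_betw_def)
  show "\<And>x. x \<notin> {1..2*k} \<Longrightarrow> qE k x = x" unfolding qE_def by auto
qed

lemma qE_dd:
  assumes "1 \<le> i" "i < 2*k"
  shows "dd (qE k) i = (if i < k then D i else if i = k then int k else - D (2*k-i))"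
proof -
  consider "i < k" | "i = k" | "k < i" by linarith
  then show ?thesis
  proof cases
    case 1
    then show ?thesis using assms pim_diff[of i k] by (simp add: dd_def qE_def)
  next
    case 2
    then show ?thesis using assms by (simp add: dd_def qE_def)
  next
    case 3
    have e: "2*k+1-i = Suc (2*k - i)" using assms 3 by simp
    have r: "1 \<le> 2*k - i" "2*k - i < k" using assms 3 by auto
    have "dd (qE k) i = int (pi_m k (2*k - i)) - int (pi_m k (Suc (2*k - i)))"
      using assms 3 e by (simp add: dd_def qE_def Suc_diff_Suc)
    also have "\<dots> = - D (2*k - i)" using pim_diff[OF r] by (simp add: algebra_simps)
    finally show ?thesis using 3 by simp
  qed
qed

lemma qE_inj: "inj_on (dd (qE k)) {1..<2*k}"
proof (rule inj_onI)
  fix i j assume i: "i \<in> {1..<2*k}" and j: "j \<in> {1..<2*k}" and e: "dd (qE k) i = dd (qE k) j"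
  have e': "(if i < k then D i else if i = k then int k else - D (2*k-i)) =
            (if j < k then D j else if j = k then int k else - D (2*k-j))"
    using e qE_dd[of i k] qE_dd[of j k] i j by simp
  have a: "\<bar>(if i < k then D i else if i = k then int k else - D (2*k-i))\<bar> = (if i < k then int i else if i = k then int k else int (2*k-i))"
    by (simp add: D_abs)
  have b: "\<bar>(if j < k then D j else if j = k then int k else - D (2*k-j))\<bar> = (if j < k then int j else if j = k then int k else int (2*k-j))"
    by (simp add: D_abs)
  have ab: "(if i < k then int i else if i = k then int k else int (2*k-i)) = (if j < k then int j else if j = k then int k else int (2*k-j))"
    using arg_cong[where f=abs, OF e'] unfolding a b .
  show "i = j"
  proof (cases "i < k")
    case True
    then show ?thesis using ab e' i j D_inj[of i j] D_neg[of i "2*k-j"]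
      by (auto split: if_splits)
  next
    case False
    then show ?thesis using ab e' i j D_inj[of "2*k-i" "2*k-j"] D_neg[of j "2*k-i"]
      by (auto split: if_splits)
  qed
qed

lemma qE_bd: "1 \<le> i \<Longrightarrow> i < 2*k \<Longrightarrow> \<bar>dd (qE k) i\<bar> \<le> int k"
  using qE_dd[of i k] by (simp add: D_abs)

lemma qE_sum: "(\<Sum>i\<in>{1..<2*k}. \<bar>dd (qE k) i\<bar>) = int k ^ 2"
proof (cases "k = 0")
  case True then show ?thesis by simp
next
  case False
  have "(\<Sum>i\<in>{1..<2*k}. \<bar>dd (qE k) i\<bar>) = (\<Sum>i\<in>{1..<k}. \<bar>dd (qE k) i\<bar>) + (\<Sum>i\<in>{k..<Suc k}. \<bar>dd (qE k) i\<bar>)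
     + (\<Sum>i\<in>{Suc k..<2*k}. \<bar>dd (qE k) i\<bar>)"
    using False sum.atLeastLessThan_concat[of 1 k "2*k" "\<lambda>i. \<bar>dd (qE k) i\<bar>"]
      sum.atLeastLessThan_concat[of k "Suc k" "2*k" "\<lambda>i. \<bar>dd (qE k) i\<bar>"]
    by (simp add: add.assoc)
  also have "(\<Sum>i\<in>{1..<k}. \<bar>dd (qE k) i\<bar>) = (\<Sum>i\<in>{1..<k}. int i)"
    by (intro sum.cong) (auto simp: qE_dd D_abs)
  also have "(\<Sum>i\<in>{k..<Suc k}. \<bar>dd (qE k) i\<bar>) = int k"
    using False by (simp add: qE_dd)
  also have "(\<Sum>i\<in>{Suc k..<2*k}. \<bar>dd (qE k) i\<bar>) = (\<Sum>i\<in>{Suc k..<2*k}. int (2*k - i))"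
    by (intro sum.cong) (auto simp: qE_dd D_abs)
  also have "\<dots> = (\<Sum>i\<in>{1..<k}. int i)" by (rule refl_sum)
  finally show ?thesis using G2[of k] by (simp add: power2_eq_square algebra_simps)
qed

lemma qE_mat: "perm_mat (2*k) (qE k) = four_block_mat (Pi_mat k) (0\<^sub>m k k) (0\<^sub>m k k) (back_id k * Pi_mat k)"
proof (rule eq_matI)
  show "dim_row (perm_mat (2*k) (qE k)) = dim_row (four_block_mat (Pi_mat k) (0\<^sub>m k k) (0\<^sub>m k k) (back_id k * Pi_mat k))"
    by (simp add: perm_mat_def)
  show "dim_col (perm_mat (2*k) (qE k)) = dim_col (four_block_mat (Pi_mat k) (0\<^sub>m k k) (0\<^sub>m k k) (back_id k * Pi_mat k))"
    by (simp add: perm_mat_def)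
  fix i j assume i: "i < dim_row (four_block_mat (Pi_mat k) (0\<^sub>m k k) (0\<^sub>m k k) (back_id k * Pi_mat k))"
     and j: "j < dim_col (four_block_mat (Pi_mat k) (0\<^sub>m k k) (0\<^sub>m k k) (back_id k * Pi_mat k))"
  have i2: "i < 2*k" and j2: "j < 2*k" using i j by simp_all
  have L: "perm_mat (2*k) (qE k) $$ (i,j) = (if qE k (Suc i) = Suc j then 1 else 0)"
    using i2 j2 by (simp add: perm_mat_def)
  show "perm_mat (2*k) (qE k) $$ (i,j) = four_block_mat (Pi_mat k) (0\<^sub>m k k) (0\<^sub>m k k) (back_id k * Pi_mat k) $$ (i,j)"
  proof (cases "i < k"; cases "j < k")
    assume "i < k" "j < k"
    then show ?thesis using L by (simp add: Pi_mat_idx qE_def)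
  next
    assume "i < k" "\<not> j < k"
    then show ?thesis using L i2 j2 pim_range[of "Suc i" k] by (simp add: qE_def)
  next
    assume a: "\<not> i < k" "j < k"
    have "1 \<le> 2*k - i" "2*k - i \<le> k" using a i2 by auto
    then have "pi_m k (2*k - i) \<ge> 1" using pim_range by blast
    then show ?thesis using L i2 j2 a by (simp add: qE_def)
  next
    assume a: "\<not> i < k" "\<not> j < k"
    have "(back_id k * Pi_mat k) $$ (i - k, j - k) = Pi_mat k $$ (k - 1 - (i - k), j - k)"
      using a i2 j2 by (intro back_id_mult) auto
    also have "\<dots> = (if pi_m k (2*k - i) = Suc (j - k) then 1 else 0)"
    proof -
      have "Suc (k - 1 - (i - k)) = 2*k - i" using a i2 by auto
      then show ?thesis using a i2 j2 by (subst Pi_mat_idx) auto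
    qed
    finally have "(back_id k * Pi_mat k) $$ (i - k, j - k) = (if pi_m k (2*k - i) = Suc (j - k) then 1 else 0)" .
    moreover have "qE k (Suc i) = k + pi_m k (2*k - i)" using a i2 by (simp add: qE_def)
    ultimately show ?thesis using L a i2 j2 by auto
  qed
qed


definition patt :: "int \<Rightarrow> nat \<Rightarrow> nat \<Rightarrow> int" where
  "patt s k i = (if i \<le> k then - s * D (k+1-i) else if i = k+1 then - (int k + 1) else s * D (i-k-1))"

lemma patt_abs: "s = 1 \<or> s = -1 \<Longrightarrow> \<bar>patt s k i\<bar> = (if i \<le> k then int (k+1-i) else if i = k+1 then int k + 1 else int (i-k-1))"
  by (auto simp: patt_def D_abs abs_mult)

lemma patt_inj:
  assumes s: "s = 1 \<or> s = -1"
  shows "inj_on (patt s k) {1..<2*k+1}"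
proof (rule inj_onI)
  fix i j assume i: "i \<in> {1..<2*k+1}" and j: "j \<in> {1..<2*k+1}" and e: "patt s k i = patt s k j"
  have ab: "(if i \<le> k then int (k+1-i) else if i = k+1 then int k + 1 else int (i-k-1)) =
            (if j \<le> k then int (k+1-j) else if j = k+1 then int k + 1 else int (j-k-1))"
    using arg_cong[where f=abs, OF e] unfolding patt_abs[OF s] .
  have s2: "s * s = 1" using s by auto
  have Dn: "s * D a = - s * D b \<Longrightarrow> a = 0" for a b
    using D_neg[of a b] s by auto
  have Dn2: "- s * D a = s * D b \<Longrightarrow> a = 0" for a b
    using D_neg[of a b] s by auto
  have Di: "s * D a = s * D b \<Longrightarrow> a = b" for a b
    using D_inj[of a b] s by auto
  have Di2: "- s * D a = - s * D b \<Longrightarrow> a = b" for a b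
    using D_inj[of a b] s by auto
  consider "i \<le> k" "j \<le> k" | "i \<le> k" "j = k+1" | "i \<le> k" "j > k+1"
    | "i = k+1" "j \<le> k" | "i = k+1" "j = k+1" | "i = k+1" "j > k+1"
    | "i > k+1" "j \<le> k" | "i > k+1" "j = k+1" | "i > k+1" "j > k+1" by (cases "i \<le> k"; cases "j \<le> k"; cases "i = k+1"; cases "j = k+1") auto
  then show "i = j"
  proof cases
    case 1 then show ?thesis using e i j Di2[of "k+1-i" "k+1-j"] by (simp add: patt_def)
  next
    case 2 then show ?thesis using ab i j by simp
  next
    case 3
    have "k+1-i = j-k-1" using ab 3 by simp
    then have "- s * D (k+1-i) = s * D (k+1-i)" using e 3 by (simp add: patt_def)
    then show ?thesis using Dn2[of "k+1-i" "k+1-i"] 3 i by simp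
  next
    case 4 then show ?thesis using ab i j by simp
  next
    case 5 then show ?thesis by simp
  next
    case 6 then show ?thesis using ab i j by simp
  next
    case 7
    have "k+1-j = i-k-1" using ab 7 by simp
    then have "- s * D (k+1-j) = s * D (k+1-j)" using e 7 by (simp add: patt_def)
    then show ?thesis using Dn2[of "k+1-j" "k+1-j"] 7 j by simp
  next
    case 8 then show ?thesis using ab i j by simp
  next
    case 9 then show ?thesis using e i j Di[of "i-k-1" "j-k-1"] by (simp add: patt_def)
  qed
qed

lemma patt_bd: "s = 1 \<or> s = -1 \<Longrightarrow> 1 \<le> i \<Longrightarrow> i < 2*k+1 \<Longrightarrow> \<bar>patt s k i\<bar> \<le> int k + 1"
  by (subst patt_abs) auto

lemma patt_sum:
  assumes s: "s = 1 \<or> s = -1" and k: "k \<ge> 1"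
  shows "(\<Sum>i\<in>{1..<2*k+1}. \<bar>patt s k i\<bar>) = int k ^ 2 + int k + 1"
proof -
  let ?f = "\<lambda>i. \<bar>patt s k i\<bar>"
  have "(\<Sum>i\<in>{1..<2*k+1}. ?f i) = (\<Sum>i\<in>{1..<Suc k}. ?f i) + (\<Sum>i\<in>{Suc k..<k+2}. ?f i)
     + (\<Sum>i\<in>{k+2..<2*k+1}. ?f i)"
  proof -
    have c1: "(\<Sum>i\<in>{1..<Suc k}. ?f i) + (\<Sum>i\<in>{Suc k..<2*k+1}. ?f i) = (\<Sum>i\<in>{1..<2*k+1}. ?f i)"
      by (rule sum.atLeastLessThan_concat) auto
    have c2: "(\<Sum>i\<in>{Suc k..<k+2}. ?f i) + (\<Sum>i\<in>{k+2..<2*k+1}. ?f i) = (\<Sum>i\<in>{Suc k..<2*k+1}. ?f i)"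
      by (rule sum.atLeastLessThan_concat) (use k in auto)
    show ?thesis by (metis c1 c2 add.assoc)
  qed
  also have "(\<Sum>i\<in>{1..<Suc k}. ?f i) = (\<Sum>i\<in>{1..<Suc k}. int (Suc k - i))"
    by (intro sum.cong) (auto simp: patt_abs[OF s])
  also have "\<dots> = (\<Sum>i\<in>{1..<Suc k}. int i)" by (rule refl_sum2)
  also have "(\<Sum>i\<in>{Suc k..<k+2}. ?f i) = int k + 1"
    by (simp add: patt_abs[OF s])
  also have "(\<Sum>i\<in>{k+2..<2*k+1}. ?f i) = (\<Sum>i\<in>{k+2..<2*k+1}. int (i - k - 1))"
    by (intro sum.cong) (auto simp: patt_abs[OF s])
  also have "\<dots> = (\<Sum>i\<in>{1..<k}. int i)" by (rule shift_sum)
  finally show ?thesis using G2[of k] G2[of "Suc k"] by (simp add: power2_eq_square algebra_simps)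
qed


definition qA :: "nat \<Rightarrow> nat \<Rightarrow> nat" where
  "qA k i = (if i < 1 \<or> i > 2*k+1 then i else if i \<le> k+1 then k + pi_m (k+1) (k+2-i) else pi_m k (i-k-1))"

lemma qA_perm: "qA k permutes {1..2*k+1}"
proof (rule bij_imp_permutes)
  have r: "qA k i \<in> {1..2*k+1}" if "i \<in> {1..2*k+1}" for i
  proof (cases "i \<le> k+1")
    case True
    have "1 \<le> k+2-i" "k+2-i \<le> k+1" using True that by auto
    then show ?thesis using True that pim_range[of "k+2-i" "k+1"] by (auto simp: qA_def)
  next
    case False
    have "1 \<le> i-k-1" "i-k-1 \<le> k" using False that by auto
    then show ?thesis using False that pim_range[of "i-k-1" k] by (auto simp: qA_def)
  qed
  have inj: "inj_on (qA k) {1..2*k+1}"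
  proof (rule inj_onI)
    fix i j assume i: "i \<in> {1..2*k+1}" and j: "j \<in> {1..2*k+1}" and e: "qA k i = qA k j"
    have i': "i \<le> 2*k+1" "1 \<le> i" and j': "j \<le> 2*k+1" "1 \<le> j" using i j by auto
    show "i = j"
    proof (cases "i \<le> k+1"; cases "j \<le> k+1")
      assume a: "i \<le> k+1" "j \<le> k+1"
      have "pi_m (k+1) (k+2-i) = pi_m (k+1) (k+2-j)" using e a i' j' by (simp add: qA_def)
      moreover have "k+2-i \<in> {1..k+1}" "k+2-j \<in> {1..k+1}" using a i' j' by auto
      ultimately have "k+2-i = k+2-j" using inj_onD[OF pim_inj[of "k+1"]] by blast
      then show ?thesis using a i' j' by simp
    next
      assume a: "\<not> i \<le> k+1" "\<not> j \<le> k+1"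
      have "pi_m k (i-k-1) = pi_m k (j-k-1)" using e a i' j' by (simp add: qA_def)
      moreover have "i-k-1 \<in> {1..k}" "j-k-1 \<in> {1..k}" using a i' j' by auto
      ultimately have "i-k-1 = j-k-1" using inj_onD[OF pim_inj[of k]] by blast
      then show ?thesis using a i' j' by simp
    next
      assume a: "i \<le> k+1" "\<not> j \<le> k+1"
      have "1 \<le> j-k-1" "j-k-1 \<le> k" using a j' by auto
      then have "pi_m k (j-k-1) \<le> k" using pim_range by blast
      moreover have "1 \<le> k+2-i" "k+2-i \<le> k+1" using a i' by auto
      then have "pi_m (k+1) (k+2-i) \<ge> 1" using pim_range by blast
      ultimately show ?thesis using e a i' j' by (simp add: qA_def)
    next
      assume a: "\<not> i \<le> k+1" "j \<le> k+1"
      have "1 \<le> i-k-1" "i-k-1 \<le> k" using a i' by auto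
      then have "pi_m k (i-k-1) \<le> k" using pim_range by blast
      moreover have "1 \<le> k+2-j" "k+2-j \<le> k+1" using a j' by auto
      then have "pi_m (k+1) (k+2-j) \<ge> 1" using pim_range by blast
      ultimately show ?thesis using e a i' j' by (simp add: qA_def)
    qed
  qed
  have sub: "qA k ` {1..2*k+1} \<subseteq> {1..2*k+1}" using r by blast
  have "qA k ` {1..2*k+1} = {1..2*k+1}" by (rule endo_inj_surj[OF _ sub inj]) simp
  then show "bij_betw (qA k) {1..2*k+1} {1..2*k+1}" using inj by (simp add: bij_betw_def)
  show "\<And>x. x \<notin> {1..2*k+1} \<Longrightarrow> qA k x = x" unfolding qA_def by auto
qed

lemma qA_dd:
  assumes "1 \<le> i" "i < 2*k+1" "even k"
  shows "dd (qA k) i = patt 1 k i"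
proof -
  consider "i \<le> k" | "i = k+1" | "k+1 < i" by linarith
  then show ?thesis
  proof cases
    case 1
    have r: "1 \<le> k+1-i" "k+1-i < k+1" using assms 1 by auto
    have e: "k+2-i = Suc (k+1-i)" using 1 by simp
    have "dd (qA k) i = int (pi_m (k+1) (k+1-i)) - int (pi_m (k+1) (Suc (k+1-i)))"
      using assms 1 e by (simp add: dd_def qA_def)
    also have "\<dots> = - D (k+1-i)" using pim_diff[OF r] by (simp add: algebra_simps)
    finally show ?thesis using 1 by (simp add: patt_def)
  next
    case 2
    have k1: "k \<ge> 1" using assms by simp
    have "dd (qA k) i = int (pi_m k 1) - int (k + pi_m (k+1) 1)"
      using assms 2 by (simp add: dd_def qA_def)
    also have "\<dots> = int ((k+1) div 2) - int k - int ((k+2) div 2)"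
      using pim_1[of k] pim_1[of "k+1"] k1 by simp
    also have "\<dots> = - (int k + 1)" using assms(3) by (auto elim!: evenE)
    finally show ?thesis using 2 by (simp add: patt_def)
  next
    case 3
    have r: "1 \<le> i-k-1" "i-k-1 < k" using assms 3 by auto
    have e: "Suc i - k - 1 = Suc (i-k-1)" using 3 by simp
    have "dd (qA k) i = int (pi_m k (Suc (i-k-1))) - int (pi_m k (i-k-1))"
      using assms 3 e by (simp add: dd_def qA_def)
    also have "\<dots> = D (i-k-1)" using pim_diff[OF r] by simp
    finally show ?thesis using 3 by (simp add: patt_def)
  qed
qed

lemma qA_mat:
  "perm_mat (2*k+1) (qA k) = four_block_mat (0\<^sub>m (k + 1) k) (back_id (k + 1) * Pi_mat (k + 1))
                                              (Pi_mat k) (0\<^sub>m k (k + 1))"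
  (is "_ = ?R")
proof (rule eq_matI)
  show "dim_row (perm_mat (2*k+1) (qA k)) = dim_row ?R" by (simp add: perm_mat_def)
  show "dim_col (perm_mat (2*k+1) (qA k)) = dim_col ?R" by (simp add: perm_mat_def)
  fix i j assume i: "i < dim_row ?R" and j: "j < dim_col ?R"
  have i2: "i < 2*k+1" and j2: "j < 2*k+1" using i j by simp_all
  have L: "perm_mat (2*k+1) (qA k) $$ (i,j) = (if qA k (Suc i) = Suc j then 1 else 0)"
    using i2 j2 by (simp add: perm_mat_def)
  show "perm_mat (2*k+1) (qA k) $$ (i,j) = ?R $$ (i,j)"
  proof (cases "i < k+1"; cases "j < k")
    assume a: "i < k+1" "j < k"
    have "1 \<le> k+1-i" "k+1-i \<le> k+1" using a by auto
    then have "pi_m (k+1) (k+1-i) \<ge> 1" using pim_range by blast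
    moreover have "qA k (Suc i) = k + pi_m (k+1) (k+1-i)" using a by (simp add: qA_def)
    ultimately show ?thesis using L a i2 j2 by simp
  next
    assume a: "i < k+1" "\<not> j < k"
    have "(back_id (k+1) * Pi_mat (k+1)) $$ (i, j - k) = Pi_mat (k+1) $$ (k + 1 - 1 - i, j - k)"
      using a i2 j2 by (intro back_id_mult) auto
    also have "\<dots> = (if pi_m (k+1) (k+1-i) = Suc (j - k) then 1 else 0)"
    proof -
      have "Suc (k + 1 - 1 - i) = k+1-i" using a by auto
      then show ?thesis using a i2 j2 by (subst Pi_mat_idx) auto
    qed
    finally have "(back_id (k+1) * Pi_mat (k+1)) $$ (i, j - k) = (if pi_m (k+1) (k+1-i) = Suc (j - k) then 1 else 0)" .
    moreover have "qA k (Suc i) = k + pi_m (k+1) (k+1-i)" using a by (simp add: qA_def)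
    ultimately show ?thesis using L a i2 j2 by auto
  next
    assume a: "\<not> i < k+1" "j < k"
    have "Pi_mat k $$ (i - (k+1), j) = (if pi_m k (i-k) = Suc j then 1 else 0)"
    proof -
      have "Suc (i - (k+1)) = i-k" using a by auto
      then show ?thesis using a i2 j2 by (subst Pi_mat_idx) auto
    qed
    moreover have "qA k (Suc i) = pi_m k (i-k)" using a i2 by (simp add: qA_def)
    ultimately show ?thesis using L a i2 j2 by auto
  next
    assume a: "\<not> i < k+1" "\<not> j < k"
    have "1 \<le> i-k" "i-k \<le> k" using a i2 by auto
    then have "pi_m k (i-k) \<le> k" using pim_range by blast
    moreover have "qA k (Suc i) = pi_m k (i-k)" using a i2 by (simp add: qA_def)
    ultimately show ?thesis using L a i2 j2 by simp
  qed
qed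


definition qB :: "nat \<Rightarrow> nat \<Rightarrow> nat" where
  "qB k i = (if i < 1 \<or> i > 2*k+1 then i else if i \<le> k+1 then 2*k+2 - pi_m (k+1) (k+2-i) else k+1 - pi_m k (i-k-1))"

lemma rA: "i \<le> k+1 \<Longrightarrow> 1 \<le> i \<Longrightarrow> 1 \<le> pi_m (k+1) (k+2-i) \<and> pi_m (k+1) (k+2-i) \<le> k+1"
  by (rule pim_range) auto
lemma rB: "k+1 < i \<Longrightarrow> i \<le> 2*k+1 \<Longrightarrow> 1 \<le> pi_m k (i-k-1) \<and> pi_m k (i-k-1) \<le> k"
  by (rule pim_range) auto

lemma qB_perm: "qB k permutes {1..2*k+1}"
proof (rule bij_imp_permutes)
  have r: "qB k i \<in> {1..2*k+1}" if "i \<in> {1..2*k+1}" for i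
  proof (cases "i \<le> k+1")
    case True
    then show ?thesis using True that rA[of i k] by (auto simp: qB_def)
  next
    case False
    then show ?thesis using False that rB[of k i] by (auto simp: qB_def)
  qed
  have inj: "inj_on (qB k) {1..2*k+1}"
  proof (rule inj_onI)
    fix i j assume i: "i \<in> {1..2*k+1}" and j: "j \<in> {1..2*k+1}" and e: "qB k i = qB k j"
    have i': "i \<le> 2*k+1" "1 \<le> i" and j': "j \<le> 2*k+1" "1 \<le> j" using i j by auto
    show "i = j"
    proof (cases "i \<le> k+1"; cases "j \<le> k+1")
      assume a: "i \<le> k+1" "j \<le> k+1"
      have "pi_m (k+1) (k+2-i) = pi_m (k+1) (k+2-j)" using e a i' j' rA[of i k] rA[of j k] by (simp add: qB_def; linarith)
      moreover have "k+2-i \<in> {1..k+1}" "k+2-j \<in> {1..k+1}" using a i' j' by auto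
      ultimately have "k+2-i = k+2-j" using inj_onD[OF pim_inj[of "k+1"]] by blast
      then show ?thesis using a i' j' by simp
    next
      assume a: "\<not> i \<le> k+1" "\<not> j \<le> k+1"
      have "pi_m k (i-k-1) = pi_m k (j-k-1)" using e a i' j' rB[of k i] rB[of k j] by (simp add: qB_def; linarith)
      moreover have "i-k-1 \<in> {1..k}" "j-k-1 \<in> {1..k}" using a i' j' by auto
      ultimately have "i-k-1 = j-k-1" using inj_onD[OF pim_inj[of k]] by blast
      then show ?thesis using a i' j' by simp
    next
      assume a: "i \<le> k+1" "\<not> j \<le> k+1"
      then show ?thesis using e a i' j' rA[of i k] rB[of k j] by (simp add: qB_def; linarith)
    next
      assume a: "\<not> i \<le> k+1" "j \<le> k+1"
      then show ?thesis using e a i' j' rA[of j k] rB[of k i] by (simp add: qB_def; linarith)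
    qed
  qed
  have sub: "qB k ` {1..2*k+1} \<subseteq> {1..2*k+1}" using r by blast
  have "qB k ` {1..2*k+1} = {1..2*k+1}" by (rule endo_inj_surj[OF _ sub inj]) simp
  then show "bij_betw (qB k) {1..2*k+1} {1..2*k+1}" using inj by (simp add: bij_betw_def)
  show "\<And>x. x \<notin> {1..2*k+1} \<Longrightarrow> qB k x = x" unfolding qB_def by auto
qed

lemma qB_dd:
  assumes "1 \<le> i" "i < 2*k+1" "odd k"
  shows "dd (qB k) i = patt (-1) k i"
proof -
  consider "i \<le> k" | "i = k+1" | "k+1 < i" by linarith
  then show ?thesis
  proof cases
    case 1
    have r: "1 \<le> k+1-i" "k+1-i < k+1" using assms 1 by auto
    have e: "k+2-i = Suc (k+1-i)" using 1 by simp
    have b1: "pi_m (k+1) (k+1-i) \<le> k+1" using rA[of "Suc i" k] 1 by simp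
    have b2: "pi_m (k+1) (Suc (k+1-i)) \<le> k+1" using rA[of i k] 1 assms e by simp
    have "dd (qB k) i = int (2*k+2 - pi_m (k+1) (k+1-i)) - int (2*k+2 - pi_m (k+1) (Suc (k+1-i)))"
      using assms 1 e by (simp add: dd_def qB_def)
    also have "\<dots> = int (pi_m (k+1) (Suc (k+1-i))) - int (pi_m (k+1) (k+1-i))"
      using b1 b2 by (simp add: of_nat_diff)
    also have "\<dots> = D (k+1-i)" using pim_diff[OF r] by simp
    finally show ?thesis using 1 by (simp add: patt_def)
  next
    case 2
    have k1: "k \<ge> 1" using assms by (auto elim: oddE)
    have b1: "pi_m k 1 \<le> k" "pi_m (k+1) 1 \<le> k+1" using pim_range[of 1 k] pim_range[of 1 "k+1"] k1 by auto
    have "dd (qB k) i = int (k+1 - pi_m k 1) - int (2*k+2 - pi_m (k+1) 1)"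
      using assms 2 by (simp add: dd_def qB_def)
    also have "\<dots> = int k + 1 - int (pi_m k 1) - 2 * int k - 2 + int (pi_m (k+1) 1)"
      using b1 by (simp add: of_nat_diff)
    also have "\<dots> = int k + 1 - int ((k+1) div 2) - 2 * int k - 2 + int ((k+2) div 2)"
      using pim_1[of k] pim_1[of "k+1"] k1 by simp
    also have "\<dots> = - (int k + 1)" using assms(3) by (auto elim!: oddE)
    finally show ?thesis using 2 by (simp add: patt_def)
  next
    case 3
    have r: "1 \<le> i-k-1" "i-k-1 < k" using assms 3 by auto
    have e: "Suc i - k - 1 = Suc (i-k-1)" using 3 by simp
    have b1: "pi_m k (i-k-1) \<le> k" using rB[of k i] 3 assms by simp
    have b2: "pi_m k (Suc (i-k-1)) \<le> k" using rB[of k "Suc i"] 3 assms e by simp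
    have "dd (qB k) i = int (k+1 - pi_m k (Suc (i-k-1))) - int (k+1 - pi_m k (i-k-1))"
      using assms 3 e by (simp add: dd_def qB_def)
    also have "\<dots> = - (int (pi_m k (Suc (i-k-1))) - int (pi_m k (i-k-1)))"
      using b1 b2 by (simp add: of_nat_diff)
    also have "\<dots> = - D (i-k-1)" using pim_diff[OF r] by simp
    finally show ?thesis using 3 by (simp add: patt_def)
  qed
qed

lemma qB_mat:
  "perm_mat (2*k+1) (qB k) = four_block_mat (0\<^sub>m (k + 1) k)
                                              (back_id (k + 1) * Pi_mat (k + 1) * back_id (k + 1))
                                              (Pi_mat k * back_id k) (0\<^sub>m k (k + 1))"
  (is "_ = ?R")
proof (rule eq_matI)
  show "dim_row (perm_mat (2*k+1) (qB k)) = dim_row ?R" by (simp add: perm_mat_def)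
  show "dim_col (perm_mat (2*k+1) (qB k)) = dim_col ?R" by (simp add: perm_mat_def)
  fix i j assume i: "i < dim_row ?R" and j: "j < dim_col ?R"
  have i2: "i < 2*k+1" and j2: "j < 2*k+1" using i j by simp_all
  have L: "perm_mat (2*k+1) (qB k) $$ (i,j) = (if qB k (Suc i) = Suc j then 1 else 0)"
    using i2 j2 by (simp add: perm_mat_def)
  show "perm_mat (2*k+1) (qB k) $$ (i,j) = ?R $$ (i,j)"
  proof (cases "i < k+1"; cases "j < k")
    assume a: "i < k+1" "j < k"
    have "pi_m (k+1) (k+1-i) \<le> k+1" using rA[of "Suc i" k] a by simp
    moreover have "qB k (Suc i) = 2*k+2 - pi_m (k+1) (k+1-i)" using a by (simp add: qB_def)
    ultimately show ?thesis using L a i2 j2 by simp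
  next
    assume a: "i < k+1" "\<not> j < k"
    have "(back_id (k+1) * Pi_mat (k+1) * back_id (k+1)) $$ (i, j - k)
        = (back_id (k+1) * Pi_mat (k+1)) $$ (i, k + 1 - 1 - (j - k))"
      using a i2 j2 by (intro mult_back_id) auto
    also have "\<dots> = Pi_mat (k+1) $$ (k + 1 - 1 - i, k + 1 - 1 - (j - k))"
      using a i2 j2 by (intro back_id_mult) auto
    also have "\<dots> = (if pi_m (k+1) (k+1-i) = Suc (2*k - j) then 1 else 0)"
    proof -
      have "Suc (k + 1 - 1 - i) = k+1-i" "Suc (k + 1 - 1 - (j - k)) = Suc (2*k - j)" using a i2 j2 by auto
      then show ?thesis using a i2 j2 by (subst Pi_mat_idx) auto
    qed
    finally have X: "(back_id (k+1) * Pi_mat (k+1) * back_id (k+1)) $$ (i, j - k) = (if pi_m (k+1) (k+1-i) = Suc (2*k - j) then 1 else 0)" .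
    have b: "1 \<le> pi_m (k+1) (k+1-i)" "pi_m (k+1) (k+1-i) \<le> k+1" using rA[of "Suc i" k] a by simp_all
    have Q: "qB k (Suc i) = 2*k+2 - pi_m (k+1) (k+1-i)" using a by (simp add: qB_def)
    have "(qB k (Suc i) = Suc j) = (pi_m (k+1) (k+1-i) = Suc (2*k - j))" using Q b a j2 by auto
    then show ?thesis using L a i2 j2 X by auto
  next
    assume a: "\<not> i < k+1" "j < k"
    have "(Pi_mat k * back_id k) $$ (i - (k+1), j) = Pi_mat k $$ (i - (k+1), k - 1 - j)"
      using a i2 j2 by (intro mult_back_id) auto
    also have "\<dots> = (if pi_m k (i-k) = k - j then 1 else 0)"
    proof -
      have "Suc (i - (k+1)) = i-k" "Suc (k - 1 - j) = k - j" using a i2 j2 by auto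
      then show ?thesis using a i2 j2 by (subst Pi_mat_idx) auto
    qed
    finally have X: "(Pi_mat k * back_id k) $$ (i - (k+1), j) = (if pi_m k (i-k) = k - j then 1 else 0)" .
    have b: "1 \<le> pi_m k (i-k)" "pi_m k (i-k) \<le> k" using rB[of k "Suc i"] a i2 by simp_all
    have Q: "qB k (Suc i) = k + 1 - pi_m k (i-k)" using a i2 by (simp add: qB_def)
    have "(qB k (Suc i) = Suc j) = (pi_m k (i-k) = k - j)" using Q b a by auto
    then show ?thesis using L a i2 j2 X by auto
  next
    assume a: "\<not> i < k+1" "\<not> j < k"
    have b: "1 \<le> pi_m k (i-k)" using rB[of k "Suc i"] a i2 by simp_all
    moreover have "qB k (Suc i) = k + 1 - pi_m k (i-k)" using a i2 by (simp add: qB_def)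
    ultimately show ?thesis using L a i2 j2 by simp
  qed
qed


lemma ceil_half: "\<lceil>real n / 2\<rceil> = int ((n+1) div 2)"
proof (cases "even n")
  case True
  then obtain t where t: "n = 2*t" by (auto elim: evenE)
  have "(n+1) div 2 = t" using t by simp
  then show ?thesis using t by simp
next
  case False
  then obtain t where t: "n = 2*t+1" by (auto elim: oddE)
  have "(n+1) div 2 = t + 1" using t by simp
  moreover have "\<lceil>real n / 2\<rceil> = int t + 1" unfolding ceiling_eq_iff using t by simp
  ultimately show ?thesis by simp
qed

lemma half_le: "int n \<le> 2 * M \<Longrightarrow> int ((n+1) div 2) \<le> M"
  by presburger

theorem theorem3p2:
  fixes n :: nat
  assumes "n \<ge> 2"
  shows "(\<forall>p. one_costas n p \<longrightarrow> real_of_int (local_var n p) \<ge> real_of_int \<lceil>real n / 2\<rceil>)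
     \<and> (\<exists>q. one_costas n q
           \<and> local_var n q = \<lceil>real n / 2\<rceil>
           \<and> (\<forall>k. n = 2 * k \<longrightarrow>
                 perm_mat n q = four_block_mat (Pi_mat k) (0\<^sub>m k k) (0\<^sub>m k k) (back_id k * Pi_mat k))
           \<and> (\<forall>k. n = 2 * k + 1 \<and> even k \<longrightarrow>
                 perm_mat n q = four_block_mat (0\<^sub>m (k + 1) k) (back_id (k + 1) * Pi_mat (k + 1))
                                              (Pi_mat k) (0\<^sub>m k (k + 1)))
           \<and> (\<forall>k. n = 2 * k + 1 \<and> odd k \<longrightarrow>
                 perm_mat n q = four_block_mat (0\<^sub>m (k + 1) k)
                                              (back_id (k + 1) * Pi_mat (k + 1) * back_id (k + 1))
                                              (Pi_mat k * back_id k) (0\<^sub>m k (k + 1)))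
           \<and> (\<forall>p. one_costas n p \<longrightarrow> global_var n q \<le> global_var n p)
           \<and> (even n \<longrightarrow> real_of_int (global_var n q) = real n ^ 2 / 4)
           \<and> (odd n \<longrightarrow> real_of_int (global_var n q) = (real n ^ 2 + 3) / 4))"
proof (intro conjI)
  note n = assms
  show "\<forall>p. one_costas n p \<longrightarrow> real_of_int (local_var n p) \<ge> real_of_int \<lceil>real n / 2\<rceil>"
  proof (intro allI impI)
    fix p assume "one_costas n p"
    then have "int ((n+1) div 2) \<le> local_var n p" using local_lb[OF _ n] half_le by blast
    then show "real_of_int (local_var n p) \<ge> real_of_int \<lceil>real n / 2\<rceil>" by (simp add: ceil_half)
  qed
  show "\<exists>q. one_costas n q
           \<and> local_var n q = \<lceil>real n / 2\<rceil>
           \<and> (\<forall>k. n = 2 * k \<longrightarrow>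
                 perm_mat n q = four_block_mat (Pi_mat k) (0\<^sub>m k k) (0\<^sub>m k k) (back_id k * Pi_mat k))
           \<and> (\<forall>k. n = 2 * k + 1 \<and> even k \<longrightarrow>
                 perm_mat n q = four_block_mat (0\<^sub>m (k + 1) k) (back_id (k + 1) * Pi_mat (k + 1))
                                              (Pi_mat k) (0\<^sub>m k (k + 1)))
           \<and> (\<forall>k. n = 2 * k + 1 \<and> odd k \<longrightarrow>
                 perm_mat n q = four_block_mat (0\<^sub>m (k + 1) k)
                                              (back_id (k + 1) * Pi_mat (k + 1) * back_id (k + 1))
                                              (Pi_mat k * back_id k) (0\<^sub>m k (k + 1)))
           \<and> (\<forall>p. one_costas n p \<longrightarrow> global_var n q \<le> global_var n p)
           \<and> (even n \<longrightarrow> real_of_int (global_var n q) = real n ^ 2 / 4)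
           \<and> (odd n \<longrightarrow> real_of_int (global_var n q) = (real n ^ 2 + 3) / 4)"
  proof (cases "even n")
    case True
    then obtain k where k: "n = 2*k" by (auto elim: evenE)
    have cf: "one_costas n (qE k)" "local_var n (qE k) \<le> int k"
      "global_var n (qE k) = (\<Sum>i\<in>{1..<n}. \<bar>dd (qE k) i\<bar>)"
      using costas_from[of "qE k" n "int k"] qE_perm[of k] qE_inj[of k] qE_bd[of _ k] n k by auto
    have lv: "local_var n (qE k) = \<lceil>real n / 2\<rceil>"
      using cf(2) local_lb[OF cf(1) n] k ceil_half[of n] by simp
    have gv: "global_var n (qE k) = int k ^ 2" using cf(3) qE_sum[of k] k by simp
    show ?thesis
    proof (intro exI[of _ "qE k"] conjI allI impI)
      show "one_costas n (qE k)" by (rule cf(1))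
      show "local_var n (qE k) = \<lceil>real n / 2\<rceil>" by (rule lv)
      fix k' assume "n = 2 * k'"
      then have "k' = k" using k by simp
      then show "perm_mat n (qE k) = four_block_mat (Pi_mat k') (0\<^sub>m k' k') (0\<^sub>m k' k') (back_id k' * Pi_mat k')"
        using qE_mat[of k] k by simp
    next
      fix k' assume "n = 2 * k' + 1 \<and> even k'"
      then show "perm_mat n (qE k) = four_block_mat (0\<^sub>m (k' + 1) k') (back_id (k' + 1) * Pi_mat (k' + 1))
                                              (Pi_mat k') (0\<^sub>m k' (k' + 1))" using k by presburger
    next
      fix k' assume "n = 2 * k' + 1 \<and> odd k'"
      then show "perm_mat n (qE k) = four_block_mat (0\<^sub>m (k' + 1) k')
                                              (back_id (k' + 1) * Pi_mat (k' + 1) * back_id (k' + 1))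
                                              (Pi_mat k' * back_id k') (0\<^sub>m k' (k' + 1))" using k by presburger
    next
      fix p assume "one_costas n p"
      then show "global_var n (qE k) \<le> global_var n p" using global_lb_even[OF _ n k] gv by simp
    next
      show "real_of_int (global_var n (qE k)) = real n ^ 2 / 4" using gv k by (simp add: power2_eq_square)
    next
      assume "odd n" then show "real_of_int (global_var n (qE k)) = (real n ^ 2 + 3) / 4" using True by simp
    qed
  next
    case False
    then obtain k where k: "n = 2*k+1" by (auto elim: oddE)
    have k1: "k \<ge> 1" using n k by simp
    have ceq: "\<lceil>real n / 2\<rceil> = int k + 1" using ceil_half[of n] k by simp
    have gen: "one_costas n q \<and> local_var n q = \<lceil>real n / 2\<rceil> \<and> global_var n q = int k ^ 2 + int k + 1"
      if s: "s = 1 \<or> s = -1" and qp: "q permutes {1..n}" and qd: "\<And>i. 1 \<le> i \<Longrightarrow> i < n \<Longrightarrow> dd q i = patt s k i"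
      for s q
    proof -
      have ic: "inj_on (dd q) {1..<n} = inj_on (patt s k) {1..<n}"
        by (rule inj_on_cong) (simp add: qd)
      have inj: "inj_on (dd q) {1..<n}"
        using patt_inj[OF s, of k] k ic by simp
      have cf: "one_costas n q" "local_var n q \<le> int k + 1"
        "global_var n q = (\<Sum>i\<in>{1..<n}. \<bar>dd q i\<bar>)"
        using costas_from[OF qp inj n, of "int k + 1"] qd patt_bd[OF s, of _ k] k by auto
      have "global_var n q = (\<Sum>i\<in>{1..<2*k+1}. \<bar>patt s k i\<bar>)"
        using cf(3) qd k by (auto intro!: sum.cong)
      also have "\<dots> = int k ^ 2 + int k + 1" by (rule patt_sum[OF s k1])
      finally have "global_var n q = int k ^ 2 + int k + 1" .
      moreover have "local_var n q = int k + 1" using cf(2) local_lb[OF cf(1) n] k by simp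
      ultimately show ?thesis using cf(1) ceq by simp
    qed
    have greal: "real_of_int (int k ^ 2 + int k + 1) = (real n ^ 2 + 3) / 4"
      using k by (simp add: power2_eq_square algebra_simps)
    show ?thesis
    proof (cases "even k")
      case True
      have qd: "dd (qA k) i = patt 1 k i" if "1 \<le> i" "i < n" for i using qA_dd[of i k] that k True by simp
      have g: "one_costas n (qA k) \<and> local_var n (qA k) = \<lceil>real n / 2\<rceil> \<and> global_var n (qA k) = int k ^ 2 + int k + 1"
        using gen[of 1 "qA k"] qA_perm[of k] qd k by simp
      show ?thesis
      proof (intro exI[of _ "qA k"] conjI allI impI)
        show "one_costas n (qA k)" using g by simp
        show "local_var n (qA k) = \<lceil>real n / 2\<rceil>" using g by simp
        fix k' assume "n = 2 * k'"
        then show "perm_mat n (qA k) = four_block_mat (Pi_mat k') (0\<^sub>m k' k') (0\<^sub>m k' k') (back_id k' * Pi_mat k')"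
          using k by presburger
      next
        fix k' assume "n = 2 * k' + 1 \<and> even k'"
        then have "k' = k" using k by simp
        then show "perm_mat n (qA k) = four_block_mat (0\<^sub>m (k' + 1) k') (back_id (k' + 1) * Pi_mat (k' + 1))
                                                (Pi_mat k') (0\<^sub>m k' (k' + 1))" using qA_mat[of k] k by simp
      next
        fix k' assume "n = 2 * k' + 1 \<and> odd k'"
        then have "k' = k" using k by simp
        then show "perm_mat n (qA k) = four_block_mat (0\<^sub>m (k' + 1) k')
                                                (back_id (k' + 1) * Pi_mat (k' + 1) * back_id (k' + 1))
                                                (Pi_mat k' * back_id k') (0\<^sub>m k' (k' + 1))"
          using True \<open>n = 2 * k' + 1 \<and> odd k'\<close> by simp
      next
        fix p assume "one_costas n p"
        then show "global_var n (qA k) \<le> global_var n p" using global_lb_odd[OF _ n k] g by simp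
      next
        assume "even n" then show "real_of_int (global_var n (qA k)) = real n ^ 2 / 4" using False by simp
      next
        show "real_of_int (global_var n (qA k)) = (real n ^ 2 + 3) / 4" using g greal by simp
      qed
    next
      case oddk: False
      have qd: "dd (qB k) i = patt (-1) k i" if "1 \<le> i" "i < n" for i using qB_dd[of i k] that k oddk by simp
      have g: "one_costas n (qB k) \<and> local_var n (qB k) = \<lceil>real n / 2\<rceil> \<and> global_var n (qB k) = int k ^ 2 + int k + 1"
        using gen[of "-1" "qB k"] qB_perm[of k] qd k by simp
      show ?thesis
      proof (intro exI[of _ "qB k"] conjI allI impI)
        show "one_costas n (qB k)" using g by simp
        show "local_var n (qB k) = \<lceil>real n / 2\<rceil>" using g by simp
        fix k' assume "n = 2 * k'"
        then show "perm_mat n (qB k) = four_block_mat (Pi_mat k') (0\<^sub>m k' k') (0\<^sub>m k' k') (back_id k' * Pi_mat k')"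
          using k by presburger
      next
        fix k' assume "n = 2 * k' + 1 \<and> even k'"
        then have "k' = k" using k by simp
        then show "perm_mat n (qB k) = four_block_mat (0\<^sub>m (k' + 1) k') (back_id (k' + 1) * Pi_mat (k' + 1))
                                                (Pi_mat k') (0\<^sub>m k' (k' + 1))"
          using oddk \<open>n = 2 * k' + 1 \<and> even k'\<close> by simp
      next
        fix k' assume "n = 2 * k' + 1 \<and> odd k'"
        then have "k' = k" using k by simp
        then show "perm_mat n (qB k) = four_block_mat (0\<^sub>m (k' + 1) k')
                                                (back_id (k' + 1) * Pi_mat (k' + 1) * back_id (k' + 1))
                                                (Pi_mat k' * back_id k') (0\<^sub>m k' (k' + 1))"
          using qB_mat[of k] k by simp
      next
        fix p assume "one_costas n p"
        then show "global_var n (qB k) \<le> global_var n p" using global_lb_odd[OF _ n k] g by simp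
      next
        assume "even n" then show "real_of_int (global_var n (qB k)) = real n ^ 2 / 4" using False by simp
      next
        show "real_of_int (global_var n (qB k)) = (real n ^ 2 + 3) / 4" using g greal by simp
      qed
    qed
  qed
qed


end
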